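(* For every braid $b\in\mathcal{B}_n$ one has $\Lambda(\hat b)=\Lambda(\widehat{b\Delta_n^2})$ and $\Lambda_{tr}(b)=\Lambda_{tr}(b\Delta_n)$. For every braid $b\in\mathcal{B}_3$ one has $\Lambda_{pb}(b)=\Lambda_{pb}(b\Delta_3)$.
   Context: $C_n(\mathbb{C})=\{(z_1,\dots,z_n): z_i\ne z_j\ (i\ne j)\}$, $\mathcal{S}_n$ acts by permuting coordinates; $\mathcal{B}_n=\pi_1(C_n(\mathbb{C})/\mathcal{S}_n)$; $\Delta_n$ is the Garside element ($\Delta_n^2$ the full twist); $\hat b$ is the conjugacy class of $b$. $\mathcal{E}^{tr}=C_n(\mathbb{R})/\mathcal{S}_n$ is connected and simply connected so $\mathcal{B}_n\cong\pi_1(C_n(\mathbb{C})/\mathcal{S}_n,\mathcal{E}^{tr})$; $b_{tr}$ is the image of $b$. For $n=3$, $\mathcal{E}_{pb}$ is the set of unordered triples with one real point and a pair of complex conjugate non-real points (connected, simply connected), and $b_{pb}$ the image of $b$ in $\pi_1(C_3(\mathbb{C})/\mathcal{S}_3,\mathcal{E}_{pb})$. A map from an open rectangle $R$ (sides parallel to the axes), continuous on $\bar R$, represents $b_{tr}$ (resp. $b_{pb}$) if it maps the open horizontal sides into $\mathcal{E}^{tr}$ (resp. $\mathcal{E}_{pb}$) and its restriction to the closure of every maximal vertical segment represents the class; $\Lambda_{tr}(b)$, $\Lambda_{pb}(b)$ are the infima of $\lambda(R)$ = (vertical side length)/(horizontal side length) over rectangles admitting holomorphic representing maps. For an annulus $A=\{r<|z|<R\}$,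 $\lambda(A)=2\pi/\log(R/r)$; a map $A\to C_n(\mathbb{C})/\mathcal{S}_n$ represents $\hat b$ if its restriction to a circle $|z|=\rho$ in $A$ represents $\hat b$; $\Lambda(\hat b)$ is the infimum of $\lambda(A)$ over annuli admitting a holomorphic representing map. *)

theory Defs
  imports "HOL-Complex_Analysis.Complex_Analysis"
begin

text \<open>Points of the symmetrized configuration space C_n(C)/S_n are represented as
  sets of complex numbers with exactly n elements.  Since the quotient map
  C_n(C) -> C_n(C)/S_n is an unbranched holomorphic covering, a map into
  C_n(C)/S_n is continuous (resp. holomorphic) iff it locally lifts to a
  continuous (resp. holomorphic) map into C_n(C), i.e. locally it is given by
  n pairwise distinct continuous (holomorphic) functions.\<close>

definition conf_map_on :: "nat \<Rightarrow> ('a::metric_space) set \<Rightarrow> ('a \<Rightarrow> complex set) \<Rightarrow> bool" where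
  "conf_map_on n A f \<longleftrightarrow>
     (\<forall>x\<in>A. \<exists>e>0. \<exists>g::nat \<Rightarrow> 'a \<Rightarrow> complex.
        (\<forall>i<n. continuous_on (A \<inter> ball x e) (g i)) \<and>
        (\<forall>y\<in>A \<inter> ball x e. inj_on (\<lambda>i. g i y) {..<n} \<and> f y = (\<lambda>i. g i y) ` {..<n}))"

definition conf_holo_on :: "nat \<Rightarrow> complex set \<Rightarrow> (complex \<Rightarrow> complex set) \<Rightarrow> bool" where
  "conf_holo_on n A f \<longleftrightarrow> open A \<and>
     (\<forall>x\<in>A. \<exists>e>0. \<exists>g::nat \<Rightarrow> complex \<Rightarrow> complex.
        (\<forall>i<n. g i holomorphic_on (A \<inter> ball x e)) \<and>
        (\<forall>y\<in>A \<inter> ball x e. inj_on (\<lambda>i. g i y) {..<n} \<and> f y = (\<lambda>i. g i y) ` {..<n}))"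

definition cjoin :: "(real \<Rightarrow> complex set) \<Rightarrow> (real \<Rightarrow> complex set) \<Rightarrow> real \<Rightarrow> complex set" where
  "cjoin p q t = (if t \<le> 1/2 then p (2 * t) else q (2 * t - 1))"

definition crev :: "(real \<Rightarrow> complex set) \<Rightarrow> real \<Rightarrow> complex set" where
  "crev p t = p (1 - t)"

definition conf_loop :: "nat \<Rightarrow> complex set \<Rightarrow> (real \<Rightarrow> complex set) \<Rightarrow> bool" where
  "conf_loop n x p \<longleftrightarrow> conf_map_on n {0..1} p \<and> p 0 = x \<and> p 1 = x"

text \<open>Homotopy of paths with endpoints moving in a set E (equality in pi_1(X,E)).\<close>
definition conf_rel_homotopic ::
  "nat \<Rightarrow> complex set set \<Rightarrow> (real \<Rightarrow> complex set) \<Rightarrow> (real \<Rightarrow> complex set) \<Rightarrow> bool" where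
  "conf_rel_homotopic n E p q \<longleftrightarrow>
     (\<exists>H :: real \<times> real \<Rightarrow> complex set. conf_map_on n ({0..1} \<times> {0..1}) H \<and>
        (\<forall>t\<in>{0..1}. H (0, t) = p t \<and> H (1, t) = q t) \<and>
        (\<forall>s\<in>{0..1}. H (s, 0) \<in> E \<and> H (s, 1) \<in> E))"

text \<open>Free homotopy of loops (equality of conjugacy classes).\<close>
definition conf_free_homotopic ::
  "nat \<Rightarrow> (real \<Rightarrow> complex set) \<Rightarrow> (real \<Rightarrow> complex set) \<Rightarrow> bool" where
  "conf_free_homotopic n p q \<longleftrightarrow>
     (\<exists>H :: real \<times> real \<Rightarrow> complex set. conf_map_on n ({0..1} \<times> {0..1}) H \<and>
        (\<forall>t\<in>{0..1}. H (0, t) = p t \<and> H (1, t) = q t) \<and>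
        (\<forall>s\<in>{0..1}. H (s, 0) = H (s, 1)))"

text \<open>Base point (in E^tr) and the Garside element / full twist as loops at it.\<close>
definition base_conf :: "nat \<Rightarrow> complex set" where
  "base_conf n = (\<lambda>k. complex_of_real (real k - (real n + 1) / 2)) ` {1..n}"

definition half_twist :: "nat \<Rightarrow> real \<Rightarrow> complex set" where
  "half_twist n t = (\<lambda>z. exp (\<i> * of_real (pi * t)) * z) ` base_conf n"

definition full_twist :: "nat \<Rightarrow> real \<Rightarrow> complex set" where
  "full_twist n t = (\<lambda>z. exp (\<i> * of_real (2 * pi * t)) * z) ` base_conf n"

definition E_tr :: "complex set set" where
  "E_tr = {S. S \<subseteq> \<real>}"

definition E_pb :: "complex set set" where
  "E_pb = {S. \<exists>x w. x \<in> \<real> \<and> Im w \<noteq> 0 \<and> S = {x, w, cnj w}}"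

text \<open>Path from the base point {-1,0,1} to {-i,0,i} in E_pb, used for the
  identification pi_1(X, base) = pi_1(X, E_pb).\<close>
definition pb_connect :: "real \<Rightarrow> complex set" where
  "pb_connect t = {0, exp (\<i> * of_real (pi * t / 2)), - exp (\<i> * of_real (pi * t / 2))}"

definition rect :: "real \<Rightarrow> real \<Rightarrow> real \<Rightarrow> real \<Rightarrow> complex set" where
  "rect a b c d = {z. a < Re z \<and> Re z < b \<and> c < Im z \<and> Im z < d}"

definition rect_closed :: "real \<Rightarrow> real \<Rightarrow> real \<Rightarrow> real \<Rightarrow> complex set" where
  "rect_closed a b c d = {z. a \<le> Re z \<and> Re z \<le> b \<and> c \<le> Im z \<and> Im z \<le> d}"

definition represents_rect ::
  "nat \<Rightarrow> complex set set \<Rightarrow> (real \<Rightarrow> complex set) \<Rightarrow> real \<Rightarrow> real \<Rightarrow> real \<Rightarrow> real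
     \<Rightarrow> (complex \<Rightarrow> complex set) \<Rightarrow> bool" where
  "represents_rect n E p a b c d f \<longleftrightarrow>
     conf_map_on n (rect_closed a b c d) f \<and>
     (\<forall>x. a < x \<and> x < b \<longrightarrow> f (Complex x c) \<in> E \<and> f (Complex x d) \<in> E) \<and>
     (\<forall>x. a < x \<and> x < b \<longrightarrow>
        conf_rel_homotopic n E (\<lambda>t. f (Complex x (c + t * (d - c)))) p)"

definition Lambda_rel :: "nat \<Rightarrow> complex set set \<Rightarrow> (real \<Rightarrow> complex set) \<Rightarrow> ereal" where
  "Lambda_rel n E p = Inf {ereal ((d - c) / (b - a)) | a b c d.
       a < b \<and> c < d \<and>
       (\<exists>f. conf_holo_on n (rect a b c d) f \<and> represents_rect n E p a b c d f)}"

definition Lambda_tr :: "nat \<Rightarrow> (real \<Rightarrow> complex set) \<Rightarrow> ereal" where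
  "Lambda_tr n p = Lambda_rel n E_tr p"

definition Lambda_pb :: "(real \<Rightarrow> complex set) \<Rightarrow> ereal" where
  "Lambda_pb p = Lambda_rel 3 E_pb (cjoin (crev pb_connect) (cjoin p pb_connect))"

definition annulus :: "real \<Rightarrow> real \<Rightarrow> complex set" where
  "annulus r R = {z. r < cmod z \<and> cmod z < R}"

definition Lambda_conj :: "nat \<Rightarrow> (real \<Rightarrow> complex set) \<Rightarrow> ereal" where
  "Lambda_conj n p = Inf {ereal (2 * pi / ln (R / r)) | r R.
       0 < r \<and> r < R \<and>
       (\<exists>f. conf_holo_on n (annulus r R) f \<and>
          (\<exists>\<rho>. r < \<rho> \<and> \<rho> < R \<and>
             conf_free_homotopic n (\<lambda>t. f (of_real \<rho> * exp (2 * pi * \<i> * of_real t))) p))}"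

end

theory Submission
  imports Defs
begin


definition sc :: "complex \<Rightarrow> complex set \<Rightarrow> complex set" where
  "sc k S = (\<lambda>z. k * z) ` S"

lemma conf_map_comp:
  fixes A :: "'a::metric_space set" and B :: "'b::metric_space set"
  assumes q: "conf_map_on n B q" and phc: "continuous_on A \<phi>" and phi: "\<phi> ` A \<subseteq> B"
    and kc: "continuous_on A \<kappa>" and knz: "\<And>x. x \<in> A \<Longrightarrow> \<kappa> x \<noteq> 0"
  shows "conf_map_on n A (\<lambda>x. sc (\<kappa> x) (q (\<phi> x)))"
  unfolding conf_map_on_def
proof
  fix x assume x: "x \<in> A"
  then have "\<phi> x \<in> B" using phi by auto
  then obtain e g where e: "e > 0" and gc: "\<forall>i<n. continuous_on (B \<inter> ball (\<phi> x) e) (g i)"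
    and gi: "\<forall>y\<in>B \<inter> ball (\<phi> x) e. inj_on (\<lambda>i. g i y) {..<n} \<and> q y = (\<lambda>i. g i y) ` {..<n}"
    using q unfolding conf_map_on_def by meson
  obtain d where d: "d > 0" and dd: "\<forall>x'\<in>A. dist x' x < d \<longrightarrow> dist (\<phi> x') (\<phi> x) < e"
    using phc x e unfolding continuous_on_iff by meson
  have sub: "\<phi> ` (A \<inter> ball x d) \<subseteq> B \<inter> ball (\<phi> x) e"
  proof
    fix w assume "w \<in> \<phi> ` (A \<inter> ball x d)"
    then obtain x' where x': "x' \<in> A" "dist x x' < d" "w = \<phi> x'" by auto
    then have "dist (\<phi> x') (\<phi> x) < e" using dd by (simp add: dist_commute)
    then show "w \<in> B \<inter> ball (\<phi> x) e" using x' phi by (auto simp: dist_commute)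
  qed
  show "\<exists>d>0. \<exists>g'::nat \<Rightarrow> 'a \<Rightarrow> complex.
        (\<forall>i<n. continuous_on (A \<inter> ball x d) (g' i)) \<and>
        (\<forall>y\<in>A \<inter> ball x d. inj_on (\<lambda>i. g' i y) {..<n} \<and> sc (\<kappa> y) (q (\<phi> y)) = (\<lambda>i. g' i y) ` {..<n})"
  proof (intro exI conjI allI impI ballI)
    show "d > 0" by (rule d)
    fix i assume "i < n"
    have "continuous_on (A \<inter> ball x d) (\<lambda>y. g i (\<phi> y))"
      apply (rule continuous_on_compose2[OF gc[rule_format, OF \<open>i<n\<close>]])
      using phc apply (auto intro: continuous_on_subset)[1]
      using sub by blast
    then show "continuous_on (A \<inter> ball x d) (\<lambda>y. \<kappa> y * g i (\<phi> y))"
      by (intro continuous_intros) (auto intro: continuous_on_subset[OF kc])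
  next
    fix y assume y: "y \<in> A \<inter> ball x d"
    then have "\<phi> y \<in> B \<inter> ball (\<phi> x) e" using sub by blast
    then have gy: "inj_on (\<lambda>i. g i (\<phi> y)) {..<n}" "q (\<phi> y) = (\<lambda>i. g i (\<phi> y)) ` {..<n}" using gi by auto
    have k: "\<kappa> y \<noteq> 0" using knz y by auto
    show "inj_on (\<lambda>i. \<kappa> y * g i (\<phi> y)) {..<n}"
      using gy(1) k by (auto simp: inj_on_def)
    show "sc (\<kappa> y) (q (\<phi> y)) = (\<lambda>i. \<kappa> y * g i (\<phi> y)) ` {..<n}"
      unfolding sc_def gy(2) image_image by simp
  qed
qed

lemma conf_holo_scale:
  assumes f: "conf_holo_on n A f" and h: "h holomorphic_on A" and hnz: "\<And>z. z \<in> A \<Longrightarrow> h z \<noteq> 0"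
  shows "conf_holo_on n A (\<lambda>z. sc (h z) (f z))"
  unfolding conf_holo_on_def
proof (intro conjI ballI)
  show "open A" using f by (simp add: conf_holo_on_def)
  fix x assume x: "x \<in> A"
  then obtain e g where e: "e > 0" and gc: "\<forall>i<n. g i holomorphic_on (A \<inter> ball x e)"
    and gi: "\<forall>y\<in>A \<inter> ball x e. inj_on (\<lambda>i. g i y) {..<n} \<and> f y = (\<lambda>i. g i y) ` {..<n}"
    using f unfolding conf_holo_on_def by meson
  show "\<exists>e>0. \<exists>g'::nat \<Rightarrow> complex \<Rightarrow> complex.
        (\<forall>i<n. g' i holomorphic_on (A \<inter> ball x e)) \<and>
        (\<forall>y\<in>A \<inter> ball x e. inj_on (\<lambda>i. g' i y) {..<n} \<and> sc (h y) (f y) = (\<lambda>i. g' i y) ` {..<n})"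
  proof (intro exI conjI allI impI ballI)
    show "e > 0" by (rule e)
    fix i assume "i < n"
    then show "(\<lambda>y. h y * g i y) holomorphic_on (A \<inter> ball x e)"
      using gc h by (intro holomorphic_intros) (auto intro: holomorphic_on_subset)
  next
    fix y assume y: "y \<in> A \<inter> ball x e"
    then have gy: "inj_on (\<lambda>i. g i y) {..<n}" "f y = (\<lambda>i. g i y) ` {..<n}" using gi by auto
    have k: "h y \<noteq> 0" using hnz y by auto
    show "inj_on (\<lambda>i. h y * g i y) {..<n}"
      using gy(1) k by (auto simp: inj_on_def)
    show "sc (h y) (f y) = (\<lambda>i. h y * g i y) ` {..<n}"
      unfolding sc_def gy(2) image_image by simp
  qed
qed

abbreviation sq :: "(real \<times> real) set" where "sq \<equiv> {0..1} \<times> {0..1}"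

lemma rel_reparam:
  assumes H: "conf_map_on n sq H"
    and cs: "continuous_on sq \<sigma>" and ct: "continuous_on sq \<tau>" and ck: "continuous_on sq \<kappa>"
    and rng: "\<And>x. x \<in> sq \<Longrightarrow> \<sigma> x \<in> {0..1} \<and> \<tau> x \<in> {0..1}"
    and knz: "\<And>x. x \<in> sq \<Longrightarrow> \<kappa> x \<noteq> 0"
    and p: "\<And>t. t \<in> {0..1} \<Longrightarrow> sc (\<kappa> (0,t)) (H (\<sigma> (0,t), \<tau> (0,t))) = p t"
    and q: "\<And>t. t \<in> {0..1} \<Longrightarrow> sc (\<kappa> (1,t)) (H (\<sigma> (1,t), \<tau> (1,t))) = q t"
    and E: "\<And>s. s \<in> {0..1} \<Longrightarrow> sc (\<kappa> (s,0)) (H (\<sigma> (s,0), \<tau> (s,0))) \<in> E \<and>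
                 sc (\<kappa> (s,1)) (H (\<sigma> (s,1), \<tau> (s,1))) \<in> E"
  shows "conf_rel_homotopic n E p q"
proof -
  have G: "conf_map_on n sq (\<lambda>x. sc (\<kappa> x) (H ((\<lambda>x. (\<sigma> x, \<tau> x)) x)))"
    by (rule conf_map_comp[OF H _ _ ck knz]) (use cs ct rng in \<open>auto intro!: continuous_intros\<close>)
  show ?thesis unfolding conf_rel_homotopic_def
    by (rule exI[where x="\<lambda>x. sc (\<kappa> x) (H (\<sigma> x, \<tau> x))"]) (use G p q E in auto)
qed

lemma free_reparam:
  assumes H: "conf_map_on n sq H"
    and cs: "continuous_on sq \<sigma>" and ct: "continuous_on sq \<tau>" and ck: "continuous_on sq \<kappa>"
    and rng: "\<And>x. x \<in> sq \<Longrightarrow> \<sigma> x \<in> {0..1} \<and> \<tau> x \<in> {0..1}"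
    and knz: "\<And>x. x \<in> sq \<Longrightarrow> \<kappa> x \<noteq> 0"
    and p: "\<And>t. t \<in> {0..1} \<Longrightarrow> sc (\<kappa> (0,t)) (H (\<sigma> (0,t), \<tau> (0,t))) = p t"
    and q: "\<And>t. t \<in> {0..1} \<Longrightarrow> sc (\<kappa> (1,t)) (H (\<sigma> (1,t), \<tau> (1,t))) = q t"
    and E: "\<And>s. s \<in> {0..1} \<Longrightarrow> sc (\<kappa> (s,0)) (H (\<sigma> (s,0), \<tau> (s,0))) =
                 sc (\<kappa> (s,1)) (H (\<sigma> (s,1), \<tau> (s,1)))"
  shows "conf_free_homotopic n p q"
proof -
  have G: "conf_map_on n sq (\<lambda>x. sc (\<kappa> x) (H ((\<lambda>x. (\<sigma> x, \<tau> x)) x)))"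
    by (rule conf_map_comp[OF H _ _ ck knz]) (use cs ct rng in \<open>auto intro!: continuous_intros\<close>)
  show ?thesis unfolding conf_free_homotopic_def
    by (rule exI[where x="\<lambda>x. sc (\<kappa> x) (H (\<sigma> x, \<tau> x))"]) (use G p q E in auto)
qed

lemma rel_cong:
  assumes "conf_rel_homotopic n E p q" "\<And>t. t \<in> {0..1} \<Longrightarrow> p' t = p t"
  shows "conf_rel_homotopic n E p' q"
  using assms unfolding conf_rel_homotopic_def by auto

lemma free_cong:
  assumes "conf_free_homotopic n p q" "\<And>t. t \<in> {0..1} \<Longrightarrow> p' t = p t"
  shows "conf_free_homotopic n p' q"
  using assms unfolding conf_free_homotopic_def by auto

lemma rect_closed_sub: "rect a b c d \<subseteq> rect_closed a b c d"
  unfolding rect_def rect_closed_def by auto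

lemma rect_transform:
  fixes \<epsilon> :: real
  assumes ab: "a < b" and cd: "c < d"
    and f: "conf_holo_on n (rect a b c d) f" and rep: "represents_rect n E p a b c d f"
    and hh: "h holomorphic_on (rect a b c d)" and hc: "continuous_on (rect_closed a b c d) h"
    and hnz: "\<And>z. z \<in> rect_closed a b c d \<Longrightarrow> h z \<noteq> 0"
    and hv: "\<And>x. a < x \<Longrightarrow> x < b \<Longrightarrow> \<exists>l>0. \<forall>t. h (Complex x (c + t * (d - c))) = of_real l * exp (\<i> * of_real (\<epsilon> * pi * t))"
    and Ecl: "\<And>S r. S \<in> E \<Longrightarrow> r \<noteq> 0 \<Longrightarrow> sc (of_real r) S \<in> E"
    and eps: "exp (\<i> * of_real (\<epsilon> * pi)) = -1"
    and key: "\<And>l H. l > 0 \<Longrightarrow> conf_map_on n sq H \<Longrightarrow> (\<forall>t\<in>{0..1}. H (1,t) = p t) \<Longrightarrow>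
        (\<forall>s\<in>{0..1}. H (s,0) \<in> E \<and> H (s,1) \<in> E) \<Longrightarrow>
        conf_rel_homotopic n E (\<lambda>t. sc (of_real l * exp (\<i> * of_real (\<epsilon> * pi * t))) (H (0,t))) q"
  shows "\<exists>f'. conf_holo_on n (rect a b c d) f' \<and> represents_rect n E q a b c d f'"
proof (intro exI conjI)
  let ?f = "\<lambda>z. sc (h z) (f z)"
  show "conf_holo_on n (rect a b c d) ?f"
    using conf_holo_scale[OF f hh] hnz rect_closed_sub by blast
  have fm: "conf_map_on n (rect_closed a b c d) f" using rep unfolding represents_rect_def by blast
  show "represents_rect n E q a b c d ?f"
    unfolding represents_rect_def
  proof (intro conjI)
    show "conf_map_on n (rect_closed a b c d) ?f"
      using conf_map_comp[OF fm continuous_on_id _ hc hnz] by simp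
  next
  show "\<forall>x. a < x \<and> x < b \<longrightarrow> ?f (Complex x c) \<in> E \<and> ?f (Complex x d) \<in> E"
  proof (intro allI impI)
    fix x assume x: "a < x \<and> x < b"
    then obtain l where l: "l > 0" and hl: "\<forall>t. h (Complex x (c + t * (d - c))) = of_real l * exp (\<i> * of_real (\<epsilon> * pi * t))"
      using hv by blast
    have "h (Complex x c) = of_real l" using hl[rule_format, of 0] by simp
    moreover have "h (Complex x d) = of_real (-l)" using hl[rule_format, of 1] eps by simp
    moreover have "f (Complex x c) \<in> E \<and> f (Complex x d) \<in> E" using rep x unfolding represents_rect_def by blast
    ultimately show "?f (Complex x c) \<in> E \<and> ?f (Complex x d) \<in> E" using Ecl[of _ l] Ecl[of _ "-l"] l
      by (metis less_irrefl neg_0_equal_iff_equal)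
  qed
  next
  show "\<forall>x. a < x \<and> x < b \<longrightarrow> conf_rel_homotopic n E (\<lambda>t. ?f (Complex x (c + t * (d - c)))) q"
  proof (intro allI impI)
    fix x assume x: "a < x \<and> x < b"
    then obtain l where l: "l > 0" and hl: "\<forall>t. h (Complex x (c + t * (d - c))) = of_real l * exp (\<i> * of_real (\<epsilon> * pi * t))"
      using hv by blast
    from rep x obtain H where H: "conf_map_on n sq H"
      and H0: "\<forall>t\<in>{0..1}. H (0, t) = f (Complex x (c + t * (d - c))) \<and> H (1, t) = p t"
      and HE: "\<forall>s\<in>{0..1}. H (s, 0) \<in> E \<and> H (s, 1) \<in> E"
      unfolding represents_rect_def conf_rel_homotopic_def by blast
    have "conf_rel_homotopic n E (\<lambda>t. sc (of_real l * exp (\<i> * of_real (\<epsilon> * pi * t))) (H (0,t))) q"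
      using key[OF l H] H0 HE by blast
    then show "conf_rel_homotopic n E (\<lambda>t. ?f (Complex x (c + t * (d - c)))) q"
      by (rule rel_cong) (use hl H0 in auto)
  qed
  qed
qed

lemma ann_transform:
  fixes \<epsilon> :: real
  assumes f: "conf_holo_on n (annulus r R) f"
    and fr: "conf_free_homotopic n (\<lambda>t. f (of_real \<rho> * exp (2 * pi * \<i> * of_real t))) p"
    and hh: "h holomorphic_on (annulus r R)"
    and hnz: "\<And>z. z \<in> annulus r R \<Longrightarrow> h z \<noteq> 0"
    and hv: "\<exists>l>0. \<forall>t. h (of_real \<rho> * exp (2 * pi * \<i> * of_real t)) = of_real l * exp (\<i> * of_real (\<epsilon> * 2 * pi * t))"
    and key: "\<And>l H. l > 0 \<Longrightarrow> conf_map_on n sq H \<Longrightarrow> (\<forall>t\<in>{0..1}. H (1,t) = p t) \<Longrightarrow>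
        (\<forall>s\<in>{0..1}. H (s,0) = H (s,1)) \<Longrightarrow>
        conf_free_homotopic n (\<lambda>t. sc (of_real l * exp (\<i> * of_real (\<epsilon> * 2 * pi * t))) (H (0,t))) q"
  shows "\<exists>f'. conf_holo_on n (annulus r R) f' \<and>
            conf_free_homotopic n (\<lambda>t. f' (of_real \<rho> * exp (2 * pi * \<i> * of_real t))) q"
proof (intro exI conjI)
  let ?f = "\<lambda>z. sc (h z) (f z)"
  show "conf_holo_on n (annulus r R) ?f"
    using conf_holo_scale[OF f hh] hnz by blast
  obtain l where l: "l > 0" and hl: "\<forall>t. h (of_real \<rho> * exp (2 * pi * \<i> * of_real t)) = of_real l * exp (\<i> * of_real (\<epsilon> * 2 * pi * t))"
    using hv by blast
  from fr obtain H where H: "conf_map_on n sq H"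
      and H0: "\<forall>t\<in>{0..1}. H (0, t) = f (of_real \<rho> * exp (2 * pi * \<i> * of_real t)) \<and> H (1, t) = p t"
      and HE: "\<forall>s\<in>{0..1}. H (s, 0) = H (s, 1)"
    unfolding conf_free_homotopic_def by blast
  have "conf_free_homotopic n (\<lambda>t. sc (of_real l * exp (\<i> * of_real (\<epsilon> * 2 * pi * t))) (H (0,t))) q"
    using key[OF l H] H0 HE by blast
  then show "conf_free_homotopic n (\<lambda>t. ?f (of_real \<rho> * exp (2 * pi * \<i> * of_real t))) q"
    by (rule free_cong) (use hl H0 in auto)
qed



lemma convex01: "0 \<le> (s::real) \<Longrightarrow> s \<le> 1 \<Longrightarrow> 0 \<le> x \<Longrightarrow> x \<le> 1 \<Longrightarrow> 0 \<le> y \<Longrightarrow> y \<le> 1 \<Longrightarrow>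
   0 \<le> (1 - s) * x + s * y \<and> (1 - s) * x + s * y \<le> 1"
proof -
  assume a: "0 \<le> s" "s \<le> 1" "0 \<le> x" "x \<le> 1" "0 \<le> y" "y \<le> 1"
  have "(1 - s) * x \<le> (1 - s)" using a mult_left_le[of x "1-s"] by simp
  moreover have "s * y \<le> s" using a mult_left_le[of y s] by simp
  ultimately show ?thesis using a by simp
qed

lemma pos_comb: "0 \<le> s \<Longrightarrow> s \<le> 1 \<Longrightarrow> 0 < (l::real) \<Longrightarrow> 0 < (1 - s) * l + s"
  by (cases "s = 0") (auto intro: add_nonneg_pos add_pos_nonneg)

definition rclosed :: "complex set set \<Rightarrow> bool" where
  "rclosed E \<longleftrightarrow> (\<forall>S\<in>E. \<forall>r::real. r \<noteq> 0 \<longrightarrow> sc (of_real r) S \<in> E)"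

lemma rclosed_tr: "rclosed E_tr"
  unfolding rclosed_def E_tr_def sc_def by auto

lemma rclosed_pb: "rclosed E_pb"
  unfolding rclosed_def E_pb_def sc_def
proof (intro ballI allI impI)
  fix S and r :: real assume "S \<in> {S. \<exists>x w. x \<in> \<real> \<and> Im w \<noteq> 0 \<and> S = {x, w, cnj w}}" "r \<noteq> 0"
  then obtain x w where "x \<in> \<real>" "Im w \<noteq> 0" "S = {x, w, cnj w}" by auto
  moreover have "(*) (complex_of_real r) ` {x, w, cnj w} = {of_real r * x, of_real r * w, cnj (of_real r * w)}"
    by simp
  moreover have "of_real r * x \<in> \<real>" using \<open>x \<in> \<real>\<close> by simp
  moreover have "Im (of_real r * w) \<noteq> 0" using \<open>r \<noteq> 0\<close> \<open>Im w \<noteq> 0\<close> by simp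
  ultimately show "(*) (complex_of_real r) ` S \<in> {S. \<exists>x w. x \<in> \<real> \<and> Im w \<noteq> 0 \<and> S = {x, w, cnj w}}"
    by blast
qed

lemma kappa_cont: "continuous_on sq (\<lambda>x. complex_of_real ((1 - fst x) * l + fst x) * exp (\<i> * of_real (c * (\<alpha> x :: real))))"
  if "continuous_on sq \<alpha>" for l c
  using that by (intro continuous_intros) auto

lemma kappa_nz: "x \<in> sq \<Longrightarrow> l > 0 \<Longrightarrow> complex_of_real ((1 - fst x) * l + fst x) * exp (\<i> * of_real (c * (\<alpha> x :: real))) \<noteq> 0"
proof -
  assume "x \<in> sq" "l > 0"
  then have "(1 - fst x) * l + fst x \<noteq> 0" using pos_comb[of "fst x" l] by (auto simp: mem_Times_iff)
  then show ?thesis by (simp only: mult_eq_0_iff of_real_eq_0_iff exp_not_eq_zero) simp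
qed

lemma sc_E: "rclosed E \<Longrightarrow> S \<in> E \<Longrightarrow> k = of_real r \<Longrightarrow> r \<noteq> 0 \<Longrightarrow> sc k S \<in> E"
  unfolding rclosed_def by auto

lemma sc_one [simp]: "sc 1 S = S" unfolding sc_def by simp
lemma sc_sc [simp]: "sc k (sc k' S) = sc (k * k') S" unfolding sc_def image_image by (simp add: mult.assoc)



lemma bdry_E: "rclosed E \<Longrightarrow> S \<in> E \<Longrightarrow> r \<noteq> 0 \<Longrightarrow> e \<in> {0, 1, -1} \<Longrightarrow>
   sc (of_real r * exp (\<i> * of_real (pi * e))) S \<in> E"
proof -
  assume a: "rclosed E" "S \<in> E" "r \<noteq> 0" "e \<in> {0, 1, -1}"
  have "exp (\<i> * of_real (pi * e)) = of_real (if e = 0 then 1 else -1)"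
    using a(4) by (auto simp: exp_pi_i' exp_minus mult.commute)
  then show ?thesis using a by (intro sc_E[where r="r * (if e = 0 then 1 else -1)"]) auto
qed

lemma key_tr1:
  assumes l: "l > 0" and H: "conf_map_on n sq H" and H1: "\<forall>t\<in>{0..1}. H (1,t) = b t"
    and HE: "\<forall>s\<in>{0..1}. H (s,0) \<in> E_tr \<and> H (s,1) \<in> E_tr" and b1: "b 1 = base_conf n"
  shows "conf_rel_homotopic n E_tr (\<lambda>t. sc (of_real l * exp (\<i> * of_real (1 * pi * t))) (H (0,t)))
           (cjoin b (half_twist n))"
proof (rule rel_reparam[OF H, where \<sigma>=fst and \<tau>="\<lambda>x. (1 - fst x) * snd x + fst x * min 1 (2 * snd x)"
      and \<kappa>="\<lambda>x. of_real ((1 - fst x) * l + fst x) * exp (\<i> * of_real (pi * ((1 - fst x) * snd x + fst x * max 0 (2 * snd x - 1))))"], goal_cases)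
  case 1 show ?case by (intro continuous_intros)
next
  case 2 show ?case by (intro continuous_intros)
next
  case 3 show ?case by (intro kappa_cont continuous_intros)
next
  case (4 x) then show ?case using convex01[of "fst x" "snd x" "min 1 (2 * snd x)"] by (auto simp: mem_Times_iff)
next
  case (5 x) then show ?case by (rule kappa_nz[OF _ l])
next
  case (6 t) then show ?case by simp
next
  case (7 t) show ?case
  proof (cases "t \<le> 1/2")
    case True then show ?thesis using 7 H1 by (simp add: cjoin_def)
  next
    case False then show ?thesis using 7 H1 b1 by (simp add: cjoin_def half_twist_def sc_def)
  qed
next
  case (8 s)
  have r: "(1 - s) * l + s \<noteq> 0" using 8 pos_comb[OF _ _ l, of s] by auto
  have e: "(1 - s) * 0 + s * max 0 (2*0 - 1) = (0::real)" "(1 - s) * 0 + s * min 1 (2*0) = (0::real)"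
     "(1 - s) * 1 + s * max 0 (2*1 - 1) = (1::real)" "(1 - s) * 1 + s * min 1 (2*1) = (1::real)" by auto
  show ?case unfolding fst_conv snd_conv e
    by (intro conjI bdry_E[OF rclosed_tr]) (use 8 HE r in auto)
qed



lemma expi_add: "exp (\<i> * of_real a) * exp (\<i> * of_real b) = exp (\<i> * of_real (a + b))"
  by (simp add: exp_add[symmetric] distrib_left)

lemma base_tr: "base_conf n \<in> E_tr"
  unfolding base_conf_def E_tr_def by auto

lemma key_tr2:
  assumes l: "l > 0" and H: "conf_map_on n sq H" and H1: "\<forall>t\<in>{0..1}. H (1,t) = cjoin b (half_twist n) t"
    and HE: "\<forall>s\<in>{0..1}. H (s,0) \<in> E_tr \<and> H (s,1) \<in> E_tr" and b1: "b 1 = base_conf n"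
  shows "conf_rel_homotopic n E_tr (\<lambda>t. sc (of_real l * exp (\<i> * of_real (-1 * pi * t))) (H (0,t))) b"
proof (rule rel_reparam[OF H, where \<sigma>="\<lambda>x. min 1 (2 * fst x)" and \<tau>="\<lambda>x. snd x * min 1 (3/2 - fst x)"
      and \<kappa>="\<lambda>x. of_real ((1 - fst x) * l + fst x) * exp (\<i> * of_real (pi * - (snd x * min 1 (2 - 2 * fst x))))"], goal_cases)
  case 1 show ?case by (intro continuous_intros)
next
  case 2 show ?case by (intro continuous_intros)
next
  case 3 show ?case by (intro kappa_cont continuous_intros)
next
  case (4 x)
  then have "snd x * min 1 (3/2 - fst x) \<le> 1 * 1"
    by (intro mult_mono) (auto simp: mem_Times_iff)
  with 4 show ?case by (auto simp: mem_Times_iff)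
next
  case (5 x) then show ?case by (rule kappa_nz[OF _ l])
next
  case (6 t) then show ?case by simp
next
  case (7 t) then show ?case using H1 by (simp add: cjoin_def)
next
  case (8 s)
  have r: "(1 - s) * l + s \<noteq> 0" using 8 pos_comb[OF _ _ l, of s] by auto
  have e: "0 * min 1 (3/2 - s) = (0::real)" "- (0 * min 1 (2 - 2 * s)) = (0::real)" by auto
  have A: "sc (of_real ((1 - s) * l + s) * exp (\<i> * of_real (pi * 0))) (H (min 1 (2 * s), 0)) \<in> E_tr"
    by (rule bdry_E[OF rclosed_tr]) (use 8 HE r in auto)
  have B: "sc (of_real ((1 - s) * l + s) * exp (\<i> * of_real (pi * - (1 * min 1 (2 - 2 * s)))))
             (H (min 1 (2 * s), 1 * min 1 (3/2 - s))) \<in> E_tr"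
  proof (cases "s \<le> 1/2")
    case True
    then have "min 1 (2 - 2 * s) = 1" "min 1 (3/2 - s) = 1" by auto
    then show ?thesis unfolding mult_1_left
      by (intro bdry_E[OF rclosed_tr]) (use 8 HE r True in auto)
  next
    case False
    then have m: "min 1 (2 * s) = 1" "min 1 (2 - 2 * s) = 2 - 2 * s" "min 1 (3/2 - s) = 3/2 - s" by auto
    have "H (1, 3/2 - s) = cjoin b (half_twist n) (3/2 - s)" using H1 8 False by auto
    also have "\<dots> = sc (exp (\<i> * of_real (pi * (2 - 2 * s)))) (base_conf n)"
      using False 8 b1 by (auto simp: cjoin_def half_twist_def sc_def algebra_simps)
    finally have Hv: "H (1, 3/2 - s) = sc (exp (\<i> * of_real (pi * (2 - 2 * s)))) (base_conf n)" .
    have "sc (of_real ((1 - s) * l + s) * exp (\<i> * of_real (pi * - (1 * min 1 (2 - 2 * s)))))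
             (H (min 1 (2 * s), 1 * min 1 (3/2 - s))) = sc (of_real ((1 - s) * l + s)) (base_conf n)"
    proof -
      have ex: "exp (\<i> * of_real (pi * - (2 - 2 * s))) * exp (\<i> * of_real (pi * (2 - 2 * s))) = 1"
      proof -
        have "pi * - (2 - 2 * s) + pi * (2 - 2 * s) = 0" by (simp add: algebra_simps)
        then show ?thesis unfolding expi_add by simp
      qed
      show ?thesis unfolding m mult_1_left Hv sc_sc mult.assoc ex by simp
    qed
    then show ?thesis using sc_E[OF rclosed_tr base_tr refl r] by simp
  qed
  show ?case unfolding fst_conv snd_conv e using A B by simp
qed



lemma key_conj1:
  assumes l: "l > 0" and H: "conf_map_on n sq H" and H1: "\<forall>t\<in>{0..1}. H (1,t) = b t"
    and HE: "\<forall>s\<in>{0..1}. H (s,0) = H (s,1)" and b1: "b 1 = base_conf n"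
  shows "conf_free_homotopic n (\<lambda>t. sc (of_real l * exp (\<i> * of_real (1 * 2 * pi * t))) (H (0,t)))
           (cjoin b (full_twist n))"
proof (rule free_reparam[OF H, where \<sigma>=fst and \<tau>="\<lambda>x. (1 - fst x) * snd x + fst x * min 1 (2 * snd x)"
      and \<kappa>="\<lambda>x. of_real ((1 - fst x) * l + fst x) * exp (\<i> * of_real (2 * pi * ((1 - fst x) * snd x + fst x * max 0 (2 * snd x - 1))))"], goal_cases)
  case 1 show ?case by (intro continuous_intros)
next
  case 2 show ?case by (intro continuous_intros)
next
  case 3 show ?case by (intro kappa_cont continuous_intros)
next
  case (4 x) then show ?case using convex01[of "fst x" "snd x" "min 1 (2 * snd x)"] by (auto simp: mem_Times_iff)
next
  case (5 x) then show ?case by (rule kappa_nz[OF _ l])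
next
  case (6 t) then show ?case by simp
next
  case (7 t) show ?case
  proof (cases "t \<le> 1/2")
    case True then show ?thesis using 7 H1 by (simp add: cjoin_def)
  next
    case False then show ?thesis using 7 H1 b1 by (simp add: cjoin_def full_twist_def sc_def)
  qed
next
  case (8 s)
  have e: "(1 - s) * 0 + s * max 0 (2*0 - 1) = (0::real)" "(1 - s) * 0 + s * min 1 (2*0) = (0::real)"
     "(1 - s) * 1 + s * max 0 (2*1 - 1) = (1::real)" "(1 - s) * 1 + s * min 1 (2*1) = (1::real)" by auto
  have "exp (\<i> * of_real (2 * pi * 1)) = 1" by (simp add: mult.commute)
  then show ?case unfolding fst_conv snd_conv e using 8 HE by simp
qed

lemma key_conj2:
  assumes l: "l > 0" and H: "conf_map_on n sq H" and H1: "\<forall>t\<in>{0..1}. H (1,t) = cjoin b (full_twist n) t"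
    and HE: "\<forall>s\<in>{0..1}. H (s,0) = H (s,1)" and b1: "b 1 = base_conf n" and b0: "b 0 = base_conf n"
  shows "conf_free_homotopic n (\<lambda>t. sc (of_real l * exp (\<i> * of_real (-1 * 2 * pi * t))) (H (0,t))) b"
proof (rule free_reparam[OF H, where \<sigma>="\<lambda>x. min 1 (2 * fst x)" and \<tau>="\<lambda>x. snd x * min 1 (3/2 - fst x)"
      and \<kappa>="\<lambda>x. of_real ((1 - fst x) * l + fst x) * exp (\<i> * of_real (2 * pi * - (snd x * min 1 (2 - 2 * fst x))))"], goal_cases)
  case 1 show ?case by (intro continuous_intros)
next
  case 2 show ?case by (intro continuous_intros)
next
  case 3 show ?case by (intro kappa_cont continuous_intros)
next
  case (4 x)
  then have "snd x * min 1 (3/2 - fst x) \<le> 1 * 1"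
    by (intro mult_mono) (auto simp: mem_Times_iff)
  with 4 show ?case by (auto simp: mem_Times_iff)
next
  case (5 x) then show ?case by (rule kappa_nz[OF _ l])
next
  case (6 t) then show ?case by simp
next
  case (7 t) then show ?case using H1 by (simp add: cjoin_def)
next
  case (8 s)
  have e: "0 * min 1 (3/2 - s) = (0::real)" "- (0 * min 1 (2 - 2 * s)) = (0::real)" by auto
  let ?r = "complex_of_real ((1 - s) * l + s)"
  have A: "sc (?r * exp (\<i> * of_real (2 * pi * 0))) (H (min 1 (2 * s), 0)) = sc ?r (H (min 1 (2 * s), 0))"
    by simp
  have B: "sc (?r * exp (\<i> * of_real (2 * pi * - (1 * min 1 (2 - 2 * s)))))
             (H (min 1 (2 * s), 1 * min 1 (3/2 - s))) = sc ?r (H (min 1 (2 * s), 0))"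
  proof (cases "s \<le> 1/2")
    case True
    then have m: "min 1 (2 - 2 * s) = 1" "min 1 (3/2 - s) = 1" by auto
    have "exp (\<i> * of_real (2 * pi * - 1)) = 1"
      by (simp add: exp_minus mult.commute)
    moreover have "H (min 1 (2 * s), 1) = H (min 1 (2 * s), 0)" using HE 8 by auto
    ultimately show ?thesis unfolding m mult_1_left by simp
  next
    case False
    then have m: "min 1 (2 * s) = 1" "min 1 (2 - 2 * s) = 2 - 2 * s" "min 1 (3/2 - s) = 3/2 - s" by auto
    have "H (1, 3/2 - s) = cjoin b (full_twist n) (3/2 - s)" using H1 8 False by auto
    also have "\<dots> = sc (exp (\<i> * of_real (2 * pi * (2 - 2 * s)))) (base_conf n)"
      using False 8 b1 by (auto simp: cjoin_def full_twist_def sc_def algebra_simps)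
    finally have Hv: "H (1, 3/2 - s) = sc (exp (\<i> * of_real (2 * pi * (2 - 2 * s)))) (base_conf n)" .
    have H0: "H (1, 0) = base_conf n" using H1 b0 by (simp add: cjoin_def)
    have ex: "exp (\<i> * of_real (2 * pi * - (2 - 2 * s))) * exp (\<i> * of_real (2 * pi * (2 - 2 * s))) = 1"
    proof -
      have "2 * pi * - (2 - 2 * s) + 2 * pi * (2 - 2 * s) = 0" by (simp add: algebra_simps)
      then show ?thesis unfolding expi_add by simp
    qed
    have ex2: "?r * exp (\<i> * of_real (2 * pi * - (2 - 2 * s))) * exp (\<i> * of_real (2 * pi * (2 - 2 * s))) = ?r"
      by (metis ex mult.assoc mult_1_right)
    show ?thesis unfolding m mult_1_left Hv H0 sc_sc ex2 by simp
  qed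
  show ?case unfolding fst_conv snd_conv e using A B by simp
qed



definition Phi :: "real \<Rightarrow> complex set" where
  "Phi a = {0, exp (\<i> * of_real a), - exp (\<i> * of_real a)}"

abbreviation PP :: "(real \<Rightarrow> complex set) \<Rightarrow> real \<Rightarrow> complex set" where
  "PP b \<equiv> cjoin (crev pb_connect) (cjoin b pb_connect)"

lemma base3: "base_conf 3 = Phi 0"
proof -
  have "{1..3::nat} = {1,2,3}" by auto
  then show ?thesis unfolding base_conf_def Phi_def by auto
qed

lemma pbc_Phi: "pb_connect t = Phi (pi * t / 2)"
  unfolding pb_connect_def Phi_def by simp

lemma ht_Phi: "half_twist 3 t = Phi (pi * t)"
  unfolding half_twist_def base3 Phi_def by (simp add: expi_add)

lemma Phi_rot: "sc (exp (\<i> * of_real a)) (Phi c) = Phi (a + c)"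
  unfolding sc_def Phi_def by (simp add: expi_add)

lemma Phi_per: "Phi (c + pi) = Phi c"
proof -
  have "exp (\<i> * of_real (c + pi)) = - exp (\<i> * of_real c)"
    using expi_add[of c pi] by (simp add: exp_pi_i')
  then show ?thesis unfolding Phi_def by auto
qed

lemma Phi_neg: "sc (-1) (Phi c) = Phi c"
  unfolding sc_def Phi_def by auto

lemma P_val:
  "PP b t = (if t \<le> 1/2 then Phi (pi * (1 - 2 * t) / 2) else if t \<le> 3/4 then b (4 * t - 2) else Phi (pi * (4 * t - 3) / 2))"
proof -
  have "2 * (2 * t - 1) = 4 * t - 2" "2 * (2 * t - 1) - 1 = 4 * t - 3" "(2 * t - 1 \<le> 1/2) = (t \<le> 3/4)" by auto
  then show ?thesis unfolding cjoin_def crev_def pbc_Phi by auto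
qed

lemma Q_val:
  "PP (cjoin b (half_twist 3)) t = (if t \<le> 1/2 then Phi (pi * (1 - 2 * t) / 2) else if t \<le> 5/8 then b (8 * t - 4)
      else if t \<le> 3/4 then Phi (pi * (8 * t - 5)) else Phi (pi * (4 * t - 3) / 2))"
proof -
  have "2 * (2 * t - 1) = 4 * t - 2" "2 * (2 * t - 1) - 1 = 4 * t - 3" "(2 * t - 1 \<le> 1/2) = (t \<le> 3/4)"
    "2 * (4 * t - 2) = 8 * t - 4" "2 * (4 * t - 2) - 1 = 8 * t - 5" "(4 * t - 2 \<le> 1/2) = (t \<le> 5/8)" by auto
  then show ?thesis unfolding cjoin_def crev_def pbc_Phi ht_Phi by auto
qed



definition tau1 :: "real \<Rightarrow> real" where
  "tau1 t = t + min (max (t - 1/2) 0) (1/8) - min (max (t - 5/8) 0) (1/8)"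
definition alpha1 :: "real \<Rightarrow> real" where
  "alpha1 t = 8 * min (max (t - 5/8) 0) (1/8)"
definition tau2 :: "real \<Rightarrow> real" where
  "tau2 t = t - (1/2) * min (max (t - 1/2) 0) (1/4) + (1/2) * max (t - 3/4) 0"
definition alpha2 :: "real \<Rightarrow> real" where
  "alpha2 t = 10 * min (max (t - 3/4) 0) (1/12) + max (t - 5/6) 0"

lemma cont_ta: "continuous_on S (\<lambda>x. tau1 (f x))" "continuous_on S (\<lambda>x. alpha1 (f x))"
   "continuous_on S (\<lambda>x. tau2 (f x))" "continuous_on S (\<lambda>x. alpha2 (f x))"
  if "continuous_on S f" for S and f :: "'a::topological_space \<Rightarrow> real"
  unfolding tau1_def alpha1_def tau2_def alpha2_def using that by (auto intro!: continuous_intros)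

lemma key_pb1:
  assumes l: "l > 0" and H: "conf_map_on 3 sq H" and H1: "\<forall>t\<in>{0..1}. H (1,t) = PP b t"
    and HE: "\<forall>s\<in>{0..1}. H (s,0) \<in> E_pb \<and> H (s,1) \<in> E_pb" and b1: "b 1 = base_conf 3"
  shows "conf_rel_homotopic 3 E_pb (\<lambda>t. sc (of_real l * exp (\<i> * of_real (1 * pi * t))) (H (0,t)))
           (PP (cjoin b (half_twist 3)))"
proof (rule rel_reparam[OF H, where \<sigma>=fst and \<tau>="\<lambda>x. (1 - fst x) * snd x + fst x * tau1 (snd x)"
      and \<kappa>="\<lambda>x. of_real ((1 - fst x) * l + fst x) * exp (\<i> * of_real (pi * ((1 - fst x) * snd x + fst x * alpha1 (snd x))))"], goal_cases)
  case 1 show ?case by (intro continuous_intros)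
next
  case 2 show ?case by (intro continuous_intros cont_ta)
next
  case 3 show ?case by (intro kappa_cont continuous_intros cont_ta)
next
  case (4 x)
  have "0 \<le> tau1 (snd x) \<and> tau1 (snd x) \<le> 1" using 4 unfolding tau1_def by (auto simp: mem_Times_iff)
  then show ?case using 4 convex01[of "fst x" "snd x" "tau1 (snd x)"] by (auto simp: mem_Times_iff)
next
  case (5 x) then show ?case by (rule kappa_nz[OF _ l])
next
  case (6 t) then show ?case by simp
next
  case (7 t)
  have tr: "tau1 t \<in> {0..1}" using 7 unfolding tau1_def by auto
  have "sc (complex_of_real ((1 - fst (1::real, t)) * l + fst (1::real, t)) *
        exp (\<i> * of_real (pi * ((1 - fst (1::real, t)) * snd (1::real, t) + fst (1::real, t) * alpha1 (snd (1::real, t))))))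
        (H (fst (1::real, t), (1 - fst (1::real, t)) * snd (1::real, t) + fst (1::real, t) * tau1 (snd (1::real, t))))
      = sc (exp (\<i> * of_real (pi * alpha1 t))) (PP b (tau1 t))" using H1 tr by simp
  also have "\<dots> = PP (cjoin b (half_twist 3)) t"
  proof -
    consider "t \<le> 1/2" | "1/2 < t" "t \<le> 5/8" | "5/8 < t" "t \<le> 3/4" | "3/4 < t" by linarith
    then show ?thesis
    proof cases
      case 1
      then have "tau1 t = t" "alpha1 t = 0" unfolding tau1_def alpha1_def by auto
      then show ?thesis using 1 by (simp only: Q_val) (simp add: P_val)
    next
      case 2
      then have "tau1 t = 2 * t - 1/2" "alpha1 t = 0" unfolding tau1_def alpha1_def by auto
      moreover have "4 * (2 * t - 1/2) - 2 = 8 * t - 4" by simp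
      ultimately show ?thesis using 2 by (simp only: Q_val) (simp add: P_val)
    next
      case 3
      then have "tau1 t = 3/4" "alpha1 t = 8 * t - 5" unfolding tau1_def alpha1_def by auto
      then show ?thesis using 3 b1 by (simp only: Q_val) (simp add: P_val base3 Phi_rot del: of_real_mult of_real_diff of_real_add)
    next
      case 4
      then have "tau1 t = t" "alpha1 t = 1" unfolding tau1_def alpha1_def by auto
      then show ?thesis using 4 Phi_per[of "pi * (4 * t - 3) / 2"] by (simp only: Q_val) (simp add: P_val Phi_neg)
    qed
  qed
  finally show ?case .
next
  case (8 s)
  have r: "(1 - s) * l + s \<noteq> 0" using 8 pos_comb[OF _ _ l, of s] by auto
  have "tau1 0 = 0" "alpha1 0 = 0" "tau1 1 = 1" "alpha1 1 = 1" unfolding tau1_def alpha1_def by auto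
  then have e: "(1 - s) * 0 + s * tau1 0 = 0" "(1 - s) * 0 + s * alpha1 0 = 0"
     "(1 - s) * 1 + s * tau1 1 = 1" "(1 - s) * 1 + s * alpha1 1 = 1" by auto
  show ?case unfolding fst_conv snd_conv e
    by (intro conjI bdry_E[OF rclosed_pb]) (use 8 HE r in auto)
qed

lemma tau2_range: "0 \<le> t \<Longrightarrow> t \<le> 1 \<Longrightarrow> 0 \<le> tau2 t \<and> tau2 t \<le> 1"
  unfolding tau2_def min_def max_def by (auto simp: field_simps)

lemma key_pb2:
  assumes l: "l > 0" and H: "conf_map_on 3 sq H" and H1: "\<forall>t\<in>{0..1}. H (1,t) = PP (cjoin b (half_twist 3)) t"
    and HE: "\<forall>s\<in>{0..1}. H (s,0) \<in> E_pb \<and> H (s,1) \<in> E_pb"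
  shows "conf_rel_homotopic 3 E_pb (\<lambda>t. sc (of_real l * exp (\<i> * of_real (-1 * pi * t))) (H (0,t))) (PP b)"
proof (rule rel_reparam[OF H, where \<sigma>=fst and \<tau>="\<lambda>x. (1 - fst x) * snd x + fst x * tau2 (snd x)"
      and \<kappa>="\<lambda>x. of_real ((1 - fst x) * l + fst x) * exp (\<i> * of_real (pi * - ((1 - fst x) * snd x + fst x * alpha2 (snd x))))"], goal_cases)
  case 1 show ?case by (intro continuous_intros)
next
  case 2 show ?case by (intro continuous_intros cont_ta)
next
  case 3 show ?case by (intro kappa_cont continuous_intros cont_ta)
next
  case (4 x)
  have "0 \<le> tau2 (snd x) \<and> tau2 (snd x) \<le> 1" using 4 tau2_range by (auto simp: mem_Times_iff)
  then show ?case using 4 convex01[of "fst x" "snd x" "tau2 (snd x)"] by (auto simp: mem_Times_iff)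
next
  case (5 x) then show ?case by (rule kappa_nz[OF _ l])
next
  case (6 t) then show ?case by simp
next
  case (7 t)
  have tr: "tau2 t \<in> {0..1}" using 7 tau2_range by auto
  have "sc (complex_of_real ((1 - fst (1::real, t)) * l + fst (1::real, t)) *
        exp (\<i> * of_real (pi * - ((1 - fst (1::real, t)) * snd (1::real, t) + fst (1::real, t) * alpha2 (snd (1::real, t))))))
        (H (fst (1::real, t), (1 - fst (1::real, t)) * snd (1::real, t) + fst (1::real, t) * tau2 (snd (1::real, t))))
      = sc (exp (\<i> * of_real (pi * - alpha2 t))) (PP (cjoin b (half_twist 3)) (tau2 t))" using H1 tr by simp
  also have "\<dots> = PP b t"
  proof -
    consider "t \<le> 1/2" | "1/2 < t" "t \<le> 3/4" | "3/4 < t" "t \<le> 5/6" | "5/6 < t" by linarith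
    then show ?thesis
    proof cases
      case 1
      then have "tau2 t = t" "alpha2 t = 0" unfolding tau2_def alpha2_def by (auto simp: field_simps)
      then show ?thesis using 1 by (simp only: Q_val) (simp add: P_val)
    next
      case 2
      then have "tau2 t = t / 2 + 1/4" "alpha2 t = 0" unfolding tau2_def alpha2_def by (auto simp: field_simps)
      moreover have "8 * (t / 2 + 1/4) - 4 = 4 * t - 2" by simp
      ultimately show ?thesis using 2 by (simp only: Q_val) (simp add: P_val)
    next
      case 3
      then have "tau2 t = 3 * t / 2 - 1/2" "alpha2 t = 10 * t - 15/2" unfolding tau2_def alpha2_def by (auto simp: field_simps)
      moreover have "pi * - (10 * t - 15/2) + pi * (8 * (3 * t / 2 - 1/2) - 5) = pi * (4 * t - 3) / 2"
        by (simp add: algebra_simps)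
      ultimately show ?thesis using 3 apply (simp only: Q_val)
        apply (simp add: P_val Phi_rot del: of_real_mult of_real_diff of_real_add of_real_minus)
        apply (rule arg_cong[where f=Phi])
        by (simp add: field_simps)
    next
      case 4
      then have "tau2 t = 3 * t / 2 - 1/2" "alpha2 t = t" unfolding tau2_def alpha2_def by (auto simp: field_simps)
      moreover have "pi * - t + pi * (4 * (3 * t / 2 - 1/2) - 3) / 2 + pi = pi * (4 * t - 3) / 2"
        by (simp add: field_simps)
      moreover note Phi_per[of "pi * - t + pi * (4 * (3 * t / 2 - 1/2) - 3) / 2"]
      ultimately show ?thesis using 4 by (simp only: Q_val) (simp add: P_val Phi_rot del: of_real_mult of_real_diff of_real_add of_real_minus)
    qed
  qed
  finally show ?case .
next
  case (8 s)
  have r: "(1 - s) * l + s \<noteq> 0" using 8 pos_comb[OF _ _ l, of s] by auto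
  have "tau2 0 = 0" "alpha2 0 = 0" "tau2 1 = 1" "alpha2 1 = 1" unfolding tau2_def alpha2_def by (auto simp: field_simps)
  then have e: "(1 - s) * 0 + s * tau2 0 = 0" "- ((1 - s) * 0 + s * alpha2 0) = 0"
     "(1 - s) * 1 + s * tau2 1 = 1" "- ((1 - s) * 1 + s * alpha2 1) = -1" by auto
  show ?case unfolding fst_conv snd_conv e
    by (intro conjI bdry_E[OF rclosed_pb]) (use 8 HE r in auto)
qed



lemma rect_h_val:
  assumes "c < d"
  shows "exp (of_real (\<epsilon> * pi / (d - c)) * (Complex x (c + t * (d - c)) - Complex a c)) =
         of_real (exp (\<epsilon> * pi * (x - a) / (d - c))) * exp (\<i> * of_real (\<epsilon> * pi * t))"
proof -
  have "of_real (\<epsilon> * pi / (d - c)) * (Complex x (c + t * (d - c)) - Complex a c) =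
        of_real (\<epsilon> * pi * (x - a) / (d - c)) + \<i> * of_real (\<epsilon> * pi * t)"
    using assms by (simp add: complex_eq_iff field_simps)
  then show ?thesis by (simp only: exp_add exp_of_real)
qed

lemma rect_dir:
  fixes \<epsilon> :: real
  assumes ab: "a < b" and cd: "c < d" and f: "conf_holo_on n (rect a b c d) f"
    and rep: "represents_rect n E p a b c d f" and E: "rclosed E"
    and eps: "exp (\<i> * of_real (\<epsilon> * pi)) = -1"
    and key: "\<And>l H. l > 0 \<Longrightarrow> conf_map_on n sq H \<Longrightarrow> (\<forall>t\<in>{0..1}. H (1,t) = p t) \<Longrightarrow>
        (\<forall>s\<in>{0..1}. H (s,0) \<in> E \<and> H (s,1) \<in> E) \<Longrightarrow>
        conf_rel_homotopic n E (\<lambda>t. sc (of_real l * exp (\<i> * of_real (\<epsilon> * pi * t))) (H (0,t))) q"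
  shows "\<exists>f'. conf_holo_on n (rect a b c d) f' \<and> represents_rect n E q a b c d f'"
proof (rule rect_transform[OF ab cd f rep, where h="\<lambda>z. exp (of_real (\<epsilon> * pi / (d - c)) * (z - Complex a c))" and \<epsilon>=\<epsilon>])
  show "(\<lambda>z. exp (of_real (\<epsilon> * pi / (d - c)) * (z - Complex a c))) holomorphic_on rect a b c d"
    by (intro holomorphic_intros)
  show "continuous_on (rect_closed a b c d) (\<lambda>z. exp (of_real (\<epsilon> * pi / (d - c)) * (z - Complex a c)))"
    by (intro continuous_intros)
  show "\<And>z. exp (of_real (\<epsilon> * pi / (d - c)) * (z - Complex a c)) \<noteq> 0" by simp
  show "\<exists>l>0. \<forall>t. exp (of_real (\<epsilon> * pi / (d - c)) * (Complex x (c + t * (d - c)) - Complex a c)) =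
                 of_real l * exp (\<i> * of_real (\<epsilon> * pi * t))" for x
    by (rule exI[of _ "exp (\<epsilon> * pi * (x - a) / (d - c))"], intro conjI allI, simp, rule rect_h_val[OF cd])
  show "\<And>S r. S \<in> E \<Longrightarrow> r \<noteq> 0 \<Longrightarrow> sc (of_real r) S \<in> E" using E unfolding rclosed_def by blast
  show "exp (\<i> * of_real (\<epsilon> * pi)) = -1" by (rule eps)
qed (fact key)



lemma Lambda_rel_eq:
  assumes "\<And>a b c d f. a < b \<Longrightarrow> c < d \<Longrightarrow> conf_holo_on n (rect a b c d) f \<Longrightarrow> represents_rect n E p a b c d f \<Longrightarrow>
             \<exists>f'. conf_holo_on n (rect a b c d) f' \<and> represents_rect n E q a b c d f'"
    and "\<And>a b c d f. a < b \<Longrightarrow> c < d \<Longrightarrow> conf_holo_on n (rect a b c d) f \<Longrightarrow> represents_rect n E q a b c d f \<Longrightarrow>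
             \<exists>f'. conf_holo_on n (rect a b c d) f' \<and> represents_rect n E p a b c d f'"
  shows "Lambda_rel n E p = Lambda_rel n E q"
proof -
  have *: "(\<exists>f. conf_holo_on n (rect a b c d) f \<and> represents_rect n E p a b c d f) =
           (\<exists>f. conf_holo_on n (rect a b c d) f \<and> represents_rect n E q a b c d f)"
    if "a < b" "c < d" for a b c d
  proof
    assume "\<exists>f. conf_holo_on n (rect a b c d) f \<and> represents_rect n E p a b c d f"
    then obtain f where "conf_holo_on n (rect a b c d) f" "represents_rect n E p a b c d f" by blast
    then show "\<exists>f. conf_holo_on n (rect a b c d) f \<and> represents_rect n E q a b c d f"
      by (rule assms(1)[OF that])
  next
    assume "\<exists>f. conf_holo_on n (rect a b c d) f \<and> represents_rect n E q a b c d f"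
    then obtain f where "conf_holo_on n (rect a b c d) f" "represents_rect n E q a b c d f" by blast
    then show "\<exists>f. conf_holo_on n (rect a b c d) f \<and> represents_rect n E p a b c d f"
      by (rule assms(2)[OF that])
  qed
  have "{ereal ((d - c) / (b - a)) | a b c d. a < b \<and> c < d \<and>
          (\<exists>f. conf_holo_on n (rect a b c d) f \<and> represents_rect n E p a b c d f)} =
        {ereal ((d - c) / (b - a)) | a b c d. a < b \<and> c < d \<and>
          (\<exists>f. conf_holo_on n (rect a b c d) f \<and> represents_rect n E q a b c d f)}"
    apply (rule Collect_cong)
    apply (rule ex_cong1)+
    apply (rule conj_cong, rule refl)+
    by (rule *; assumption)
  then show ?thesis unfolding Lambda_rel_def by simp
qed

lemma Lambda_conj_eq:
  assumes "\<And>r R \<rho> f. 0 < r \<Longrightarrow> r < \<rho> \<Longrightarrow> \<rho> < R \<Longrightarrow> conf_holo_on n (annulus r R) f \<Longrightarrow>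
      conf_free_homotopic n (\<lambda>t. f (of_real \<rho> * exp (2 * pi * \<i> * of_real t))) p \<Longrightarrow>
      \<exists>f'. conf_holo_on n (annulus r R) f' \<and> conf_free_homotopic n (\<lambda>t. f' (of_real \<rho> * exp (2 * pi * \<i> * of_real t))) q"
    and "\<And>r R \<rho> f. 0 < r \<Longrightarrow> r < \<rho> \<Longrightarrow> \<rho> < R \<Longrightarrow> conf_holo_on n (annulus r R) f \<Longrightarrow>
      conf_free_homotopic n (\<lambda>t. f (of_real \<rho> * exp (2 * pi * \<i> * of_real t))) q \<Longrightarrow>
      \<exists>f'. conf_holo_on n (annulus r R) f' \<and> conf_free_homotopic n (\<lambda>t. f' (of_real \<rho> * exp (2 * pi * \<i> * of_real t))) p"
  shows "Lambda_conj n p = Lambda_conj n q"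
proof -
  have *: "(\<exists>f. conf_holo_on n (annulus r R) f \<and> (\<exists>\<rho>. r < \<rho> \<and> \<rho> < R \<and>
              conf_free_homotopic n (\<lambda>t. f (of_real \<rho> * exp (2 * pi * \<i> * of_real t))) p)) =
           (\<exists>f. conf_holo_on n (annulus r R) f \<and> (\<exists>\<rho>. r < \<rho> \<and> \<rho> < R \<and>
              conf_free_homotopic n (\<lambda>t. f (of_real \<rho> * exp (2 * pi * \<i> * of_real t))) q))"
    if "0 < r" for r R
  proof
    assume "\<exists>f. conf_holo_on n (annulus r R) f \<and> (\<exists>\<rho>. r < \<rho> \<and> \<rho> < R \<and>
              conf_free_homotopic n (\<lambda>t. f (of_real \<rho> * exp (2 * pi * \<i> * of_real t))) p)"
    then obtain f \<rho> where a: "conf_holo_on n (annulus r R) f" "r < \<rho>" "\<rho> < R"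
       "conf_free_homotopic n (\<lambda>t. f (of_real \<rho> * exp (2 * pi * \<i> * of_real t))) p" by blast
    from assms(1)[OF that a(2,3,1,4)] a(2,3) show "\<exists>f. conf_holo_on n (annulus r R) f \<and> (\<exists>\<rho>. r < \<rho> \<and> \<rho> < R \<and>
              conf_free_homotopic n (\<lambda>t. f (of_real \<rho> * exp (2 * pi * \<i> * of_real t))) q)" by blast
  next
    assume "\<exists>f. conf_holo_on n (annulus r R) f \<and> (\<exists>\<rho>. r < \<rho> \<and> \<rho> < R \<and>
              conf_free_homotopic n (\<lambda>t. f (of_real \<rho> * exp (2 * pi * \<i> * of_real t))) q)"
    then obtain f \<rho> where a: "conf_holo_on n (annulus r R) f" "r < \<rho>" "\<rho> < R"
       "conf_free_homotopic n (\<lambda>t. f (of_real \<rho> * exp (2 * pi * \<i> * of_real t))) q" by blast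
    from assms(2)[OF that a(2,3,1,4)] a(2,3) show "\<exists>f. conf_holo_on n (annulus r R) f \<and> (\<exists>\<rho>. r < \<rho> \<and> \<rho> < R \<and>
              conf_free_homotopic n (\<lambda>t. f (of_real \<rho> * exp (2 * pi * \<i> * of_real t))) p)" by blast
  qed
  show ?thesis unfolding Lambda_conj_def
    apply (rule arg_cong[where f=Inf])
    apply (rule Collect_cong)
    apply (rule ex_cong1)+
    apply (rule conj_cong, rule refl)+
    by (rule *; assumption)
qed

lemma ann_nz: "0 < r \<Longrightarrow> z \<in> annulus r R \<Longrightarrow> z \<noteq> 0"
  unfolding annulus_def by auto

lemma ann_dir1:
  assumes "0 < r" "conf_holo_on n (annulus r R) f" "r < \<rho>"
    "conf_free_homotopic n (\<lambda>t. f (of_real \<rho> * exp (2 * pi * \<i> * of_real t))) p"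
    and key: "\<And>l H. l > 0 \<Longrightarrow> conf_map_on n sq H \<Longrightarrow> (\<forall>t\<in>{0..1}. H (1,t) = p t) \<Longrightarrow>
        (\<forall>s\<in>{0..1}. H (s,0) = H (s,1)) \<Longrightarrow>
        conf_free_homotopic n (\<lambda>t. sc (of_real l * exp (\<i> * of_real (1 * 2 * pi * t))) (H (0,t))) q"
  shows "\<exists>f'. conf_holo_on n (annulus r R) f' \<and>
            conf_free_homotopic n (\<lambda>t. f' (of_real \<rho> * exp (2 * pi * \<i> * of_real t))) q"
proof (rule ann_transform[OF assms(2) assms(4), where h="\<lambda>z. z" and \<epsilon>=1])
  show "(\<lambda>z. z) holomorphic_on annulus r R" by (intro holomorphic_intros)
  show "\<And>z. z \<in> annulus r R \<Longrightarrow> z \<noteq> 0" using ann_nz[OF assms(1)] by blast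
  show "\<exists>l>0. \<forall>t. of_real \<rho> * exp (2 * pi * \<i> * of_real t) = of_real l * exp (\<i> * of_real (1 * 2 * pi * t))"
    using assms by (intro exI[of _ \<rho>]) (simp add: mult_ac)
qed (fact key)

lemma ann_dir2:
  assumes "0 < r" "conf_holo_on n (annulus r R) f" "r < \<rho>"
    "conf_free_homotopic n (\<lambda>t. f (of_real \<rho> * exp (2 * pi * \<i> * of_real t))) p"
    and key: "\<And>l H. l > 0 \<Longrightarrow> conf_map_on n sq H \<Longrightarrow> (\<forall>t\<in>{0..1}. H (1,t) = p t) \<Longrightarrow>
        (\<forall>s\<in>{0..1}. H (s,0) = H (s,1)) \<Longrightarrow>
        conf_free_homotopic n (\<lambda>t. sc (of_real l * exp (\<i> * of_real (-1 * 2 * pi * t))) (H (0,t))) q"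
  shows "\<exists>f'. conf_holo_on n (annulus r R) f' \<and>
            conf_free_homotopic n (\<lambda>t. f' (of_real \<rho> * exp (2 * pi * \<i> * of_real t))) q"
proof (rule ann_transform[OF assms(2) assms(4), where h="\<lambda>z. inverse z" and \<epsilon>="-1"])
  show "(\<lambda>z. inverse z) holomorphic_on annulus r R"
    using ann_nz[OF assms(1)] by (intro holomorphic_intros) auto
  show "\<And>z. z \<in> annulus r R \<Longrightarrow> inverse z \<noteq> 0" using ann_nz[OF assms(1)] by simp
  show "\<exists>l>0. \<forall>t. inverse (of_real \<rho> * exp (2 * pi * \<i> * of_real t)) = of_real l * exp (\<i> * of_real (-1 * 2 * pi * t))"
    using assms by (intro exI[of _ "inverse \<rho>"]) (simp add: mult_ac exp_minus)
qed (fact key)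



theorem lemma1:
  shows "(\<forall>(n::nat) b. conf_loop n (base_conf n) b \<longrightarrow>
            Lambda_conj n b = Lambda_conj n (cjoin b (full_twist n)) \<and>
            Lambda_tr n b = Lambda_tr n (cjoin b (half_twist n))) \<and>
         (\<forall>b. conf_loop 3 (base_conf 3) b \<longrightarrow>
            Lambda_pb b = Lambda_pb (cjoin b (half_twist 3)))"
proof (intro conjI allI impI)
  have e1: "exp (\<i> * of_real (1 * pi)) = -1" by (simp add: exp_pi_i')
  have e2: "exp (\<i> * of_real (-1 * pi)) = -1" by (simp add: exp_pi_i' exp_minus)
  fix n :: nat and b assume "conf_loop n (base_conf n) b"
  then have b0: "b 0 = base_conf n" and b1: "b 1 = base_conf n" unfolding conf_loop_def by auto
  show "Lambda_conj n b = Lambda_conj n (cjoin b (full_twist n))"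
  proof (rule Lambda_conj_eq)
    fix r R \<rho> f assume a: "0 < r" "r < \<rho>" "\<rho> < R" "conf_holo_on n (annulus r R) f"
      "conf_free_homotopic n (\<lambda>t. f (of_real \<rho> * exp (2 * pi * \<i> * of_real t))) b"
    show "\<exists>f'. conf_holo_on n (annulus r R) f' \<and> conf_free_homotopic n (\<lambda>t. f' (of_real \<rho> * exp (2 * pi * \<i> * of_real t))) (cjoin b (full_twist n))"
      apply (rule ann_dir1[OF a(1) a(4) a(2) a(5)])
      apply (rule key_conj1)
      using b1 by auto
  next
    fix r R \<rho> f assume a: "0 < r" "r < \<rho>" "\<rho> < R" "conf_holo_on n (annulus r R) f"
      "conf_free_homotopic n (\<lambda>t. f (of_real \<rho> * exp (2 * pi * \<i> * of_real t))) (cjoin b (full_twist n))"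
    show "\<exists>f'. conf_holo_on n (annulus r R) f' \<and> conf_free_homotopic n (\<lambda>t. f' (of_real \<rho> * exp (2 * pi * \<i> * of_real t))) b"
      apply (rule ann_dir2[OF a(1) a(4) a(2) a(5)])
      apply (rule key_conj2)
      using b0 b1 by auto
  qed
  show "Lambda_tr n b = Lambda_tr n (cjoin b (half_twist n))"
    unfolding Lambda_tr_def
  proof (rule Lambda_rel_eq)
    fix a1 a2 c d f assume a: "a1 < a2" "c < d" "conf_holo_on n (rect a1 a2 c d) f" "represents_rect n E_tr b a1 a2 c d f"
    show "\<exists>f'. conf_holo_on n (rect a1 a2 c d) f' \<and> represents_rect n E_tr (cjoin b (half_twist n)) a1 a2 c d f'"
      apply (rule rect_dir[OF a rclosed_tr e1])
      apply (rule key_tr1)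
      using b1 by auto
  next
    fix a1 a2 c d f assume a: "a1 < a2" "c < d" "conf_holo_on n (rect a1 a2 c d) f" "represents_rect n E_tr (cjoin b (half_twist n)) a1 a2 c d f"
    show "\<exists>f'. conf_holo_on n (rect a1 a2 c d) f' \<and> represents_rect n E_tr b a1 a2 c d f'"
      apply (rule rect_dir[OF a rclosed_tr e2])
      apply (rule key_tr2)
      using b1 by auto
  qed
next
  have e1: "exp (\<i> * of_real (1 * pi)) = -1" by (simp add: exp_pi_i')
  have e2: "exp (\<i> * of_real (-1 * pi)) = -1" by (simp add: exp_pi_i' exp_minus)
  fix b assume "conf_loop 3 (base_conf 3) b"
  then have b1: "b 1 = base_conf 3" unfolding conf_loop_def by auto
  show "Lambda_pb b = Lambda_pb (cjoin b (half_twist 3))"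
    unfolding Lambda_pb_def
  proof (rule Lambda_rel_eq)
    fix a1 a2 c d f assume a: "a1 < a2" "c < d" "conf_holo_on 3 (rect a1 a2 c d) f" "represents_rect 3 E_pb (PP b) a1 a2 c d f"
    show "\<exists>f'. conf_holo_on 3 (rect a1 a2 c d) f' \<and> represents_rect 3 E_pb (PP (cjoin b (half_twist 3))) a1 a2 c d f'"
      apply (rule rect_dir[OF a rclosed_pb e1])
      apply (rule key_pb1)
      using b1 by auto
  next
    fix a1 a2 c d f assume a: "a1 < a2" "c < d" "conf_holo_on 3 (rect a1 a2 c d) f" "represents_rect 3 E_pb (PP (cjoin b (half_twist 3))) a1 a2 c d f"
    show "\<exists>f'. conf_holo_on 3 (rect a1 a2 c d) f' \<and> represents_rect 3 E_pb (PP b) a1 a2 c d f'"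
      apply (rule rect_dir[OF a rclosed_pb e2])
      apply (rule key_pb2)
      by auto
  qed
qed

end
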